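(* Let $b,n,c$ be positive integers with $2\leqslant 2b\leqslant n$, and let $\Gamma$ be an abelian group of order $2nbc$. If $\Gamma$ contains an element of order $n$, then there exists a diagonal $\mathrm{MRS}_\Gamma(n;2b;c)$. In particular, this holds if $n$ divides the exponent of $\Gamma$.
   Context: For positive integers $m,n,s,k,c$ and an abelian group $\Gamma$ of order $nkc$, an $\mathrm{MRS}_\Gamma(m,n;s,k;c)$ is a set of $c$ partially filled $m\times n$ arrays (some cells may be empty) with entries in $\Gamma$ such that: every element of $\Gamma$ appears exactly once and in a unique array; in every array each row contains exactly $s$ filled cells and each column contains exactly $k$ filled cells; and there exist $\omega,\delta\in\Gamma$ such that in every array each row sum is $\omega$ and each column sum is $\delta$. $\mathrm{MRS}_\Gamma(n;k;c)$ denotes $\mathrm{MRS}_\Gamma(n,n;k,k;c)$. In an $n\times n$ array, for $0\leqslant \ell\leqslant n-1$ the diagonal $D_\ell$ is the set of cells $(i,j)$ with $j-i\equiv \ell\pmod n$. An $\mathrm{MRS}_\Gamma(n;k;c)$ is diagonal if, in each of its arrays, the filled cells are exactly the cells of $k$ consecutive diagonals $D_{t},\ldots,D_{t+k-1}$ (indices modulo $n$). *)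

theory Defs
  imports Main
begin

definition natmul :: "nat \<Rightarrow> 'a::ab_group_add \<Rightarrow> 'a" where
  "natmul m x = (\<Sum>i<m. x)"

definition elem_order :: "'a::{ab_group_add,finite} \<Rightarrow> nat" where
  "elem_order x = (LEAST m. 0 < m \<and> natmul m x = 0)"

definition group_exponent :: "'a::{ab_group_add,finite} itself \<Rightarrow> nat" where
  "group_exponent _ = (LEAST e. 0 < e \<and> (\<forall>x::'a. natmul e x = 0))"

(* A family of c partially filled m x n arrays: A t i j is the content of cell (i,j)
   of array t (t < c, i < m, j < n); None = empty cell. Values outside the index
   ranges are irrelevant. *)
definition filled_cells :: "nat \<Rightarrow> nat \<Rightarrow> nat \<Rightarrow> (nat \<Rightarrow> nat \<Rightarrow> nat \<Rightarrow> 'a option) \<Rightarrow> (nat \<times> nat \<times> nat) set" where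
  "filled_cells m n c A = {(t,i,j). t < c \<and> i < m \<and> j < n \<and> A t i j \<noteq> None}"

definition is_MRS ::
  "nat \<Rightarrow> nat \<Rightarrow> nat \<Rightarrow> nat \<Rightarrow> nat \<Rightarrow> (nat \<Rightarrow> nat \<Rightarrow> nat \<Rightarrow> 'a::{ab_group_add,finite} option) \<Rightarrow> bool" where
  "is_MRS m n s k c A \<longleftrightarrow>
     card (UNIV :: 'a set) = n * k * c \<and>
     bij_betw (\<lambda>(t,i,j). the (A t i j)) (filled_cells m n c A) (UNIV :: 'a set) \<and>
     (\<forall>t<c. \<forall>i<m. card {j. j < n \<and> A t i j \<noteq> None} = s) \<and>
     (\<forall>t<c. \<forall>j<n. card {i. i < m \<and> A t i j \<noteq> None} = k) \<and>
     (\<exists>\<omega> \<delta>.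
        (\<forall>t<c. \<forall>i<m. (\<Sum>j\<in>{j. j < n \<and> A t i j \<noteq> None}. the (A t i j)) = \<omega>) \<and>
        (\<forall>t<c. \<forall>j<n. (\<Sum>i\<in>{i. i < m \<and> A t i j \<noteq> None}. the (A t i j)) = \<delta>))"

definition on_diagonal :: "nat \<Rightarrow> nat \<Rightarrow> nat \<Rightarrow> nat \<Rightarrow> bool" where
  "on_diagonal n l i j \<longleftrightarrow> (int j - int i) mod int n = int l mod int n"

definition is_diagonal_MRS ::
  "nat \<Rightarrow> nat \<Rightarrow> nat \<Rightarrow> (nat \<Rightarrow> nat \<Rightarrow> nat \<Rightarrow> 'a::{ab_group_add,finite} option) \<Rightarrow> bool" where
  "is_diagonal_MRS n k c A \<longleftrightarrow>
     is_MRS n n k k c A \<and>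
     (\<forall>t<c. \<exists>t0. \<forall>i<n. \<forall>j<n.
         (A t i j \<noteq> None \<longleftrightarrow> (\<exists>l<k. on_diagonal n (t0 + l) i j)))"

end

theory Submission
  imports Defs "HOL-Computational_Algebra.Primes"
begin

lemma natmul_0[simp]: "natmul 0 x = 0" by (simp add: natmul_def)
lemma natmul_Suc: "natmul (Suc m) x = x + natmul m x" by (simp add: natmul_def)
lemma natmul_add: "natmul (a + b) x = natmul a x + natmul b x"
  by (induction a) (simp_all add: natmul_Suc add.assoc)
lemma natmul_zero[simp]: "natmul m 0 = 0" by (simp add: natmul_def)
lemma natmul_mult: "natmul (a * b) x = natmul a (natmul b x)"
  by (induction a) (simp_all add: natmul_Suc natmul_add)
lemma natmul_distrib: "natmul m (x + y) = natmul m x + natmul m y"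
  by (induction m) (simp_all add: natmul_Suc algebra_simps)
lemma natmul_minus: "natmul m (- x) = - natmul m x"
  by (induction m) (simp_all add: natmul_Suc algebra_simps)
lemma natmul_diff: "natmul m (x - y) = natmul m x - natmul m y"
  using natmul_distrib[of m x "-y"] by (simp add: natmul_minus)
lemma natmul_1[simp]: "natmul 1 x = x" by (simp add: natmul_def)

lemma exists_annihilator:
  fixes x :: "'a::{ab_group_add,finite}"
  shows "\<exists>m>0. natmul m x = 0"
proof -
  have "\<not> inj (\<lambda>m::nat. natmul m x)"
  proof
    assume "inj (\<lambda>m::nat. natmul m x)"
    then have "finite (UNIV::nat set)"
      using finite_imageD[of "\<lambda>m::nat. natmul m x" UNIV] by (simp add: finite_UNIV)
    then show False by simp
  qed
  then obtain i j where ij: "i \<noteq> j" "natmul i x = natmul j x" unfolding inj_def by auto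
  show ?thesis
  proof (cases "i < j")
    case True
    have "natmul j x = natmul (j - i) x + natmul i x" using True natmul_add[of "j-i" i x] by simp
    then show ?thesis using ij True by (intro exI[of _ "j-i"]) auto
  next
    case False
    then have "j < i" using ij by auto
    have "natmul i x = natmul (i - j) x + natmul j x" using \<open>j<i\<close> natmul_add[of "i-j" j x] by simp
    then show ?thesis using ij \<open>j<i\<close> by (intro exI[of _ "i-j"]) auto
  qed
qed

lemma elem_order_pos:
  fixes x :: "'a::{ab_group_add,finite}"
  shows "elem_order x > 0 \<and> natmul (elem_order x) x = 0"
  unfolding elem_order_def using exists_annihilator[of x] by (rule LeastI_ex)

lemma elem_order_min:
  fixes x :: "'a::{ab_group_add,finite}"
  shows "0 < m \<Longrightarrow> m < elem_order x \<Longrightarrow> natmul m x \<noteq> 0"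
  unfolding elem_order_def using not_less_Least by blast

lemma natmul_eq0_iff:
  fixes x :: "'a::{ab_group_add,finite}"
  shows "natmul m x = 0 \<longleftrightarrow> elem_order x dvd m"
proof
  assume h: "natmul m x = 0"
  let ?o = "elem_order x"
  have o: "?o > 0" "natmul ?o x = 0" using elem_order_pos by auto
  have "m = ?o * (m div ?o) + m mod ?o" by simp
  then have "natmul m x = natmul (?o * (m div ?o)) x + natmul (m mod ?o) x"
    by (metis natmul_add)
  also have "natmul (?o * (m div ?o)) x = 0"
    by (metis mult.commute natmul_mult natmul_zero o(2))
  finally have "natmul (m mod ?o) x = 0" using h by simp
  then have "m mod ?o = 0" using elem_order_min[of "m mod ?o" x] o by (meson mod_less_divisor neq0_conv)
  then show "?o dvd m" by auto
next
  assume "elem_order x dvd m"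
  then obtain k where "m = elem_order x * k" by auto
  then show "natmul m x = 0" using elem_order_pos[of x]
    by (metis mult.commute natmul_mult natmul_zero)
qed

lemma elem_order_eqI:
  fixes x :: "'a::{ab_group_add,finite}"
  assumes "\<And>m. natmul m x = 0 \<longleftrightarrow> r dvd m"
  shows "elem_order x = r"
  using assms natmul_eq0_iff[of _ x] by (meson dvd_antisym dvd_refl)

lemma elem_order_natmul:
  fixes x :: "'a::{ab_group_add,finite}"
  assumes "k dvd elem_order x"
  shows "elem_order (natmul k x) = elem_order x div k"
proof (rule elem_order_eqI)
  fix m
  have k0: "k > 0" using assms elem_order_pos[of x] by (metis dvd_0_left_iff gr0I less_irrefl)
  obtain r where r: "elem_order x = k * r" using assms by auto
  have "natmul m (natmul k x) = 0 \<longleftrightarrow> k * r dvd m * k"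
    by (simp add: natmul_mult[symmetric] natmul_eq0_iff r)
  also have "\<dots> \<longleftrightarrow> r dvd m" using k0 by (simp add: mult.commute)
  also have "r = elem_order x div k" using r k0 by simp
  finally show "natmul m (natmul k x) = 0 \<longleftrightarrow> elem_order x div k dvd m" .
qed

lemma elem_order_add_coprime:
  fixes u v :: "'a::{ab_group_add,finite}"
  assumes "coprime (elem_order u) (elem_order v)"
  shows "elem_order (u + v) = elem_order u * elem_order v"
proof (rule elem_order_eqI)
  fix m
  let ?r = "elem_order u" and ?s = "elem_order v"
  show "natmul m (u + v) = 0 \<longleftrightarrow> ?r * ?s dvd m"
  proof
    assume h: "natmul m (u + v) = 0"
    have h2: "natmul m u + natmul m v = 0" using h by (simp only: natmul_distrib)
    then have e: "natmul m u = - natmul m v" by (simp only: eq_neg_iff_add_eq_0)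
    have e2: "natmul m v = - natmul m u" using e by (simp only: minus_minus)
    have "natmul (?s * m) u = natmul ?s (natmul m u)" by (simp only: natmul_mult)
    also have "\<dots> = - natmul ?s (natmul m v)" by (simp only: e natmul_minus)
    also have "natmul ?s (natmul m v) = natmul (m * ?s) v" by (simp only: natmul_mult[symmetric] mult.commute)
    also have "natmul (m * ?s) v = 0" by (simp only: natmul_eq0_iff dvd_triv_right)
    finally have "natmul (?s * m) u = 0" by simp
    then have "?r dvd ?s * m" by (simp only: natmul_eq0_iff)
    then have r: "?r dvd m" using assms coprime_dvd_mult_right_iff by blast
    have "natmul (?r * m) v = natmul ?r (natmul m v)" by (simp only: natmul_mult)
    also have "\<dots> = - natmul ?r (natmul m u)" by (simp only: e2 natmul_minus)
    also have "natmul ?r (natmul m u) = natmul (m * ?r) u" by (simp only: natmul_mult[symmetric] mult.commute)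
    also have "natmul (m * ?r) u = 0" by (simp only: natmul_eq0_iff dvd_triv_right)
    finally have "natmul (?r * m) v = 0" by simp
    then have "?s dvd ?r * m" by (simp only: natmul_eq0_iff)
    then have s: "?s dvd m" using assms coprime_dvd_mult_right_iff coprime_commute by blast
    show "?r * ?s dvd m" using r s assms divides_mult by blast
  next
    assume a: "?r * ?s dvd m"
    have "?r dvd m" using a dvd_mult_left by blast
    moreover have "?s dvd m" using a dvd_mult_right by blast
    ultimately have "natmul m u = 0" "natmul m v = 0" using natmul_eq0_iff by blast+
    then show "natmul m (u + v) = 0" by (simp add: natmul_distrib)
  qed
qed

lemma all_orders_dvd_max:
  fixes z y :: "'a::{ab_group_add,finite}"
  assumes zmax: "\<And>y::'a. elem_order y \<le> elem_order z"
  shows "elem_order y dvd elem_order z"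
proof (rule ccontr)
  let ?t = "elem_order y" and ?M = "elem_order z"
  assume nd: "\<not> ?t dvd ?M"
  have t0: "?t \<noteq> 0" using elem_order_pos[of y] by simp
  have M0: "?M \<noteq> 0" using elem_order_pos[of z] by simp
  obtain p where p: "prime p" "multiplicity p ?t > multiplicity p ?M"
    using nd multiplicity_le_imp_dvd[OF t0, of ?M] not_le by blast
  define a where "a = multiplicity p ?t"
  define b where "b = multiplicity p ?M"
  have pa: "p ^ a dvd ?t" unfolding a_def by (rule multiplicity_dvd)
  have pb: "p ^ b dvd ?M" unfolding b_def by (rule multiplicity_dvd)
  define u where "u = natmul (?t div p ^ a) y"
  define v where "v = natmul (p ^ b) z"
  have ou: "elem_order u = p ^ a" unfolding u_def
    using pa t0 by (subst elem_order_natmul) (auto simp: div_div_eq_right)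
  have ov: "elem_order v = ?M div p ^ b" unfolding v_def using pb by (simp add: elem_order_natmul)
  have "\<not> p dvd ?M div p ^ b" unfolding b_def
    by (rule multiplicity_decompose; use M0 p(1) not_prime_unit in blast)
  then have "coprime p (?M div p ^ b)" using p(1) by (simp add: prime_imp_coprime)
  then have cop: "coprime (p ^ a) (?M div p ^ b)" by simp
  have ouv: "elem_order (u + v) = p ^ a * (?M div p ^ b)"
    using elem_order_add_coprime[of u v] cop ou ov by simp
  have "p ^ b < p ^ a" using p prime_gt_1_nat a_def b_def by (simp add: power_strict_increasing)
  moreover have "?M div p ^ b > 0" using pb M0 by (metis dvd_div_eq_0_iff gr0I)
  ultimately have "p ^ b * (?M div p ^ b) < p ^ a * (?M div p ^ b)" by simp
  also have "p ^ b * (?M div p ^ b) = ?M" using pb by simp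
  finally show False using zmax[of "u+v"] ouv by simp
qed

lemma exists_max_order:
  "\<exists>z::'a::{ab_group_add,finite}. \<forall>y::'a. elem_order y \<le> elem_order z"
proof -
  have "finite (range (elem_order :: 'a \<Rightarrow> nat))" by simp
  then obtain z :: 'a where "elem_order z = Max (range (elem_order :: 'a \<Rightarrow> nat))"
    using Max_in[of "range (elem_order :: 'a \<Rightarrow> nat)"] by (metis UNIV_not_empty empty_is_image imageE)
  then show ?thesis by (metis Max_ge \<open>finite _\<close> rangeI)
qed

lemma exponent_order:
  fixes z :: "'a::{ab_group_add,finite}"
  assumes zmax: "\<And>y::'a. elem_order y \<le> elem_order z"
  shows "group_exponent TYPE('a) = elem_order z"
proof -
  let ?M = "elem_order z"
  have P: "0 < ?M \<and> (\<forall>x::'a. natmul ?M x = 0)"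
    using elem_order_pos[of z] all_orders_dvd_max[OF zmax] natmul_eq0_iff by blast
  let ?E = "group_exponent TYPE('a)"
  have E: "0 < ?E \<and> (\<forall>x::'a. natmul ?E x = 0)" unfolding group_exponent_def
    using P by (rule LeastI)
  have "?E \<le> ?M" unfolding group_exponent_def using P by (rule Least_le)
  moreover have "?M dvd ?E" using E natmul_eq0_iff by blast
  ultimately show ?thesis using E by (simp add: dvd_imp_le le_antisym)
qed

lemma exists_order_of_dvd_exponent:
  assumes "n dvd group_exponent TYPE('a::{ab_group_add,finite})" "0 < n"
  shows "\<exists>x::'a. elem_order x = n"
proof -
  obtain z :: 'a where zmax: "\<And>y::'a. elem_order y \<le> elem_order z"
    using exists_max_order by blast
  have e: "group_exponent TYPE('a) = elem_order z" using zmax by (rule exponent_order)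
  have d: "(elem_order z div n) dvd elem_order z" using assms e by auto
  have "elem_order (natmul (elem_order z div n) z) = elem_order z div (elem_order z div n)"
    using d by (rule elem_order_natmul)
  also have "\<dots> = n"
  proof -
    obtain k where k: "elem_order z = n * k" using assms e by auto
    have "k > 0" using k elem_order_pos[of z] by (metis gr0I mult_0_right less_irrefl)
    then show ?thesis using k assms by simp
  qed
  finally show ?thesis by blast
qed

locale cyc =
  fixes g :: "'a::{ab_group_add,finite}" and n :: nat
  assumes ordg: "elem_order g = n"
begin

definition mul :: "nat \<Rightarrow> 'a" where "mul i = natmul i g"
definition H :: "'a set" where "H = range mul"

lemma n_pos: "0 < n" using elem_order_pos[of g] ordg by simp

lemma mul_add: "mul (i + j) = mul i + mul j" by (simp add: mul_def natmul_add)

lemma mul_n_mult: "mul (n * k) = 0"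
  unfolding mul_def using natmul_eq0_iff[of "n*k" g] ordg by simp

lemma mul_mod: "mul i = mul (i mod n)"
proof -
  have "i = n * (i div n) + i mod n" by simp
  then have "mul i = mul (n * (i div n)) + mul (i mod n)" by (metis mul_add)
  then show ?thesis by (simp add: mul_n_mult)
qed

lemma mul_1: "mul 1 = g" by (simp add: mul_def natmul_Suc)

lemma mul_inj: "inj_on mul {..<n}"
proof (rule inj_onI)
  fix i j assume ij: "i \<in> {..<n}" "j \<in> {..<n}" "mul i = mul j"
  show "i = j"
  proof (rule ccontr)
    assume "i \<noteq> j"
    then consider "i < j" | "j < i" by linarith
    then show False
    proof cases
      case 1
      have "mul j = mul (j - i) + mul i" using 1 mul_add[of "j-i" i] by simp
      then have "natmul (j - i) g = 0" using ij by (simp add: mul_def)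
      moreover have "j - i < n" using ij(2) by auto
      ultimately show False using elem_order_min[of "j-i" g] ordg 1 by simp
    next
      case 2
      have "mul i = mul (i - j) + mul j" using 2 mul_add[of "i-j" j] by simp
      then have "natmul (i - j) g = 0" using ij by (simp add: mul_def)
      moreover have "i - j < n" using ij(1) by auto
      ultimately show False using elem_order_min[of "i-j" g] ordg 2 by simp
    qed
  qed
qed

lemma H_eq: "H = mul ` {..<n}"
proof
  show "H \<subseteq> mul ` {..<n}" unfolding H_def
  proof
    fix h assume "h \<in> range mul"
    then obtain i where "h = mul i" by auto
    then have "h = mul (i mod n)" by (simp add: mul_mod[of i])
    moreover have "i mod n \<in> {..<n}" using n_pos by simp
    ultimately show "h \<in> mul ` {..<n}" by blast
  qed
qed (auto simp: H_def)

lemma card_H: "card H = n" using H_eq mul_inj by (simp add: card_image)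

lemma H_mem: "mul i \<in> H" by (simp add: H_def)

lemma H_memE: assumes "h \<in> H" obtains i where "i < n" "h = mul i"
  using assms H_eq by auto

lemma H_0: "0 \<in> H" using H_mem[of 0] by (simp add: mul_def)

lemma H_add: "a \<in> H \<Longrightarrow> b \<in> H \<Longrightarrow> a + b \<in> H"
  unfolding H_def by (auto simp: mul_add[symmetric])

lemma H_neg: assumes "a \<in> H" shows "- a \<in> H"
proof -
  obtain i where i: "i < n" "a = mul i" using assms by (rule H_memE)
  have "mul (n - i) + mul i = 0" using i mul_add[of "n-i" i] mul_n_mult[of 1] by simp
  then have "mul (n - i) = - mul i" by (simp only: eq_neg_iff_add_eq_0)
  then have "- a = mul (n - i)" using i by simp
  then show ?thesis by (simp add: H_mem)
qed

lemma H_diff: "a \<in> H \<Longrightarrow> b \<in> H \<Longrightarrow> a - b \<in> H"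
  using H_add[of a "-b"] H_neg[of b] by simp

lemma card_coset: "card ((\<lambda>i. y + mul i) ` {..<n}) = n"
proof -
  have "inj_on (\<lambda>i. y + mul i) {..<n}" using mul_inj by (auto simp: inj_on_def)
  then show ?thesis by (simp add: card_image)
qed

end

context cyc
begin

lemma exists_x0:
  assumes card: "card (UNIV :: 'a set) = 2 * n * m"
  shows "\<exists>x0. x0 \<notin> H \<and> x0 + x0 \<in> H"
proof (rule ccontr)
  assume "\<not> ?thesis"
  then have K: "\<And>x. x + x \<in> H \<Longrightarrow> x \<in> H" by blast
  define S where "S = UNIV - H"
  define r where "r = {(x,y). x \<in> S \<and> y \<in> S \<and> (y - x \<in> H \<or> y + x \<in> H)}"
  have eq: "equiv S r"
  proof (rule equivI)
    show "refl_on S r" unfolding refl_on_def r_def using H_0 by auto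
    show "r \<subseteq> S \<times> S" unfolding r_def by auto
    show "sym r" unfolding sym_def r_def
    proof (intro allI impI)
      fix x y assume "(x, y) \<in> {(x,y). x \<in> S \<and> y \<in> S \<and> (y - x \<in> H \<or> y + x \<in> H)}"
      then have "x \<in> S" "y \<in> S" "y - x \<in> H \<or> y + x \<in> H" by auto
      moreover have "y - x \<in> H \<Longrightarrow> x - y \<in> H" using H_neg[of "y-x"] by simp
      moreover have "y + x \<in> H \<Longrightarrow> x + y \<in> H" by (simp add: add.commute)
      ultimately show "(y, x) \<in> {(x,y). x \<in> S \<and> y \<in> S \<and> (y - x \<in> H \<or> y + x \<in> H)}" by auto
    qed
    show "trans r" unfolding trans_def r_def
    proof (intro allI impI)
      fix x y z
      assume "(x, y) \<in> {(x,y). x \<in> S \<and> y \<in> S \<and> (y - x \<in> H \<or> y + x \<in> H)}"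
        "(y, z) \<in> {(x,y). x \<in> S \<and> y \<in> S \<and> (y - x \<in> H \<or> y + x \<in> H)}"
      then have a: "x \<in> S" "z \<in> S" "y - x \<in> H \<or> y + x \<in> H" "z - y \<in> H \<or> z + y \<in> H" by auto
      have "z - x \<in> H \<or> z + x \<in> H"
      proof -
        have e1: "z - x = (z - y) + (y - x)" by simp
        have e2: "z + x = (z + y) - (y - x)" by simp
        have e3: "z + x = (z - y) + (y + x)" by simp
        have e4: "z - x = (z + y) - (y + x)" by simp
        show ?thesis
        proof (cases "y - x \<in> H")
          case yx: True
          show ?thesis
          proof (cases "z - y \<in> H")
            case True then show ?thesis using yx e1 H_add[of "z - y" "y - x"] by simp
          next
            case False then have "z + y \<in> H" using a(4) by blast
            then show ?thesis using yx e2 H_diff[of "z + y" "y - x"] by simp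
          qed
        next
          case yx: False
          then have yx': "y + x \<in> H" using a(3) by blast
          show ?thesis
          proof (cases "z - y \<in> H")
            case True then show ?thesis using yx' e3 H_add[of "z - y" "y + x"] by simp
          next
            case False then have "z + y \<in> H" using a(4) by blast
            then show ?thesis using yx' e4 H_diff[of "z + y" "y + x"] by simp
          qed
        qed
      qed
      then show "(x, z) \<in> {(x,y). x \<in> S \<and> y \<in> S \<and> (y - x \<in> H \<or> y + x \<in> H)}" using a by auto
    qed
  qed
  have cls: "r `` {x} = (\<lambda>i. x + mul i) ` {..<n} \<union> (\<lambda>i. - x + mul i) ` {..<n}" if xS: "x \<in> S" for x
  proof
    show "r `` {x} \<subseteq> (\<lambda>i. x + mul i) ` {..<n} \<union> (\<lambda>i. - x + mul i) ` {..<n}"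
    proof
      fix y assume "y \<in> r `` {x}"
      then have "y - x \<in> H \<or> y + x \<in> H" unfolding r_def by auto
      then show "y \<in> (\<lambda>i. x + mul i) ` {..<n} \<union> (\<lambda>i. - x + mul i) ` {..<n}"
      proof
        assume "y - x \<in> H"
        then obtain i where "i < n" "y - x = mul i" by (rule H_memE)
        then have "y = x + mul i" "i \<in> {..<n}" by (auto simp: algebra_simps)
        then show ?thesis by blast
      next
        assume "y + x \<in> H"
        then obtain i where "i < n" "y + x = mul i" by (rule H_memE)
        then have "y = - x + mul i" "i \<in> {..<n}" by (auto simp: algebra_simps)
        then show ?thesis by blast
      qed
    qed
    show "(\<lambda>i. x + mul i) ` {..<n} \<union> (\<lambda>i. - x + mul i) ` {..<n} \<subseteq> r `` {x}"
    proof
      fix y assume "y \<in> (\<lambda>i. x + mul i) ` {..<n} \<union> (\<lambda>i. - x + mul i) ` {..<n}"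
      then obtain i where "y = x + mul i \<or> y = - x + mul i" by auto
      then show "y \<in> r `` {x}"
      proof
        assume y: "y = x + mul i"
        have "y \<notin> H"
          proof
            assume "y \<in> H"
            then have "y - mul i \<in> H" using H_diff H_mem by blast
            then show False using y xS S_def by simp
          qed
        then have "y \<in> S" using S_def by simp
        moreover have "y - x \<in> H" using y H_mem by simp
        ultimately show ?thesis using xS unfolding r_def by auto
      next
        assume y: "y = - x + mul i"
        have "y \<notin> H"
          proof
            assume "y \<in> H"
            then have "- (y - mul i) \<in> H" using H_diff H_mem H_neg by blast
            then show False using y xS S_def by simp
          qed
        then have "y \<in> S" using S_def by simp
        moreover have "y + x \<in> H" using y H_mem by simp
        ultimately show ?thesis using xS unfolding r_def by auto
      qed
    qed
  qed
  have ccard: "card (r `` {x}) = 2 * n" if xS: "x \<in> S" for x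
  proof -
    have disj: "(\<lambda>i. x + mul i) ` {..<n} \<inter> (\<lambda>i. - x + mul i) ` {..<n} = {}"
    proof (rule ccontr)
      assume "\<not> ?thesis"
      then obtain i j where "x + mul i = - x + mul j" by auto
      then have "x + x = mul j - mul i" by (simp add: algebra_simps)
      then have "x + x \<in> H" using H_diff H_mem by simp
      then have "x \<in> H" by (rule K)
      then show False using xS S_def by simp
    qed
    show ?thesis using cls[OF xS] card_Un_disjoint[OF _ _ disj] card_coset[of x] card_coset[of "-x"]
      by simp
  qed
  have "2 * n * card (S // r) = card (\<Union>(S // r))"
  proof (rule card_partition)
    show "finite (S // r)" by (simp add: finite_quotient)
    show "finite (\<Union>(S // r))" by simp
    show "\<And>c. c \<in> S // r \<Longrightarrow> card c = 2 * n" using ccard by (auto elim: quotientE)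
    show "\<And>c1 c2. c1 \<in> S // r \<Longrightarrow> c2 \<in> S // r \<Longrightarrow> c1 \<noteq> c2 \<Longrightarrow> c1 \<inter> c2 = {}"
      using quotient_disj[OF eq] by blast
  qed
  also have "\<Union>(S // r) = S" using Union_quotient[OF eq] .
  also have "card S = 2 * n * m - n" unfolding S_def using card card_H
    by (simp add: card_Diff_subset)
  finally have e: "2 * n * card (S // r) = 2 * n * m - n" .
  have "n \<le> 2 * n * m"
  proof (cases "m = 0")
    case True
    then have "card (UNIV :: 'a set) = 0" using card by simp
    then show ?thesis by simp
  next
    case False
    then show ?thesis by simp
  qed
  then have "n * (2 * card (S // r) + 1) = n * (2 * m)" using e by (simp add: algebra_simps)
  then have "2 * card (S // r) + 1 = 2 * m"
    using n_pos mult_left_cancel[of n "2 * card (S // r) + 1" "2 * m"] by linarith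
  then show False by presburger
qed

lemma exists_w:
  assumes card: "card (UNIV :: 'a set) = 2 * n * m"
  shows "\<exists>w. \<forall>y. y + y - w \<notin> H"
proof (rule ccontr)
  assume "\<not> ?thesis"
  then have W: "\<And>w. \<exists>y. y + y - w \<in> H" by blast
  obtain x0 where x0: "x0 \<notin> H" "x0 + x0 \<in> H" using exists_x0[OF card] by blast
  define K where "K = {x. x + x \<in> H}"
  have disj: "mul ` {..<n} \<inter> (\<lambda>i. x0 + mul i) ` {..<n} = {}"
  proof (rule ccontr)
    assume "\<not> ?thesis"
    then obtain i j where "mul j = x0 + mul i" by auto
    then have "x0 = mul j - mul i" by (simp add: algebra_simps)
    then have "x0 \<in> H" using H_diff H_mem by simp
    then show False using x0 by simp
  qed
  have sub: "mul ` {..<n} \<union> (\<lambda>i. x0 + mul i) ` {..<n} \<subseteq> K"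
  proof
    fix y assume "y \<in> mul ` {..<n} \<union> (\<lambda>i. x0 + mul i) ` {..<n}"
    then obtain i where "y = mul i \<or> y = x0 + mul i" by auto
    then show "y \<in> K"
    proof
      assume "y = mul i" then show ?thesis unfolding K_def using H_add H_mem by simp
    next
      assume y: "y = x0 + mul i"
      have "y + y = (x0 + x0) + (mul i + mul i)" using y by (simp add: algebra_simps)
      then show ?thesis unfolding K_def using H_add H_mem x0 by simp
    qed
  qed
  have cK: "2 * n \<le> card K"
  proof -
    have "card (mul ` {..<n} \<union> (\<lambda>i. x0 + mul i) ` {..<n}) = 2 * n"
      using card_Un_disjoint[OF _ _ disj] card_coset[of x0] card_coset[of 0] by simp
    then show ?thesis using card_mono[OF _ sub] by simp
  qed
  define F where "F w = {(y, h). h \<in> H \<and> y + y + h = w}" for w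
  have fib: "card K \<le> card (F w)" for w
  proof -
    obtain y0 where y0: "y0 + y0 - w \<in> H" using W by blast
    define h0 where "h0 = - (y0 + y0 - w)"
    have h0H: "h0 \<in> H" unfolding h0_def using y0 by (rule H_neg)
    have "inj_on (\<lambda>k. (y0 + k, h0 - (k + k))) K" by (auto simp: inj_on_def)
    moreover have "(\<lambda>k. (y0 + k, h0 - (k + k))) ` K \<subseteq> F w"
    proof
      fix p assume "p \<in> (\<lambda>k. (y0 + k, h0 - (k + k))) ` K"
      then obtain k where k: "k \<in> K" "p = (y0 + k, h0 - (k + k))" by auto
      have "h0 - (k + k) \<in> H" using H_diff h0H k K_def by simp
      moreover have "y0 + k + (y0 + k) + (h0 - (k + k)) = w" unfolding h0_def by (simp add: algebra_simps)
      ultimately show "p \<in> F w" using k unfolding F_def by simp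
    qed
    ultimately show ?thesis using card_inj_on_le[of _ K "F w"] by simp
  qed
  have U: "(\<Union>w. F w) = UNIV \<times> H"
  proof
    show "(\<Union>w. F w) \<subseteq> UNIV \<times> H" unfolding F_def by auto
    show "UNIV \<times> H \<subseteq> (\<Union>w. F w)"
    proof
      fix p assume "p \<in> (UNIV :: 'a set) \<times> H"
      then obtain y h where p: "p = (y, h)" "h \<in> H" by auto
      then have "p \<in> F (y + y + h)" unfolding F_def by simp
      then show "p \<in> (\<Union>w. F w)" by blast
    qed
  qed
  have "card (\<Union>w. F w) = (\<Sum>w\<in>UNIV. card (F w))"
  proof (rule card_UN_disjoint)
    show "finite (UNIV :: 'a set)" by simp
    show "\<forall>i\<in>UNIV. finite (F i)" by simp
    show "\<forall>i\<in>UNIV. \<forall>j\<in>UNIV. i \<noteq> j \<longrightarrow> F i \<inter> F j = {}" unfolding F_def by blast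
  qed
  moreover have "card ((UNIV::'a set) \<times> H) = card (\<Union>w. F w)" by (simp only: U)
  ultimately have "card ((UNIV::'a set) \<times> H) = (\<Sum>w\<in>UNIV. card (F w))" by linarith
  also have "\<dots> \<ge> (\<Sum>w\<in>(UNIV::'a set). 2 * n)"
  proof (rule sum_mono)
    fix w :: 'a show "2 * n \<le> card (F w)" using fib[of w] cK by linarith
  qed
  finally have "card (UNIV :: 'a set) * (2 * n) \<le> card (UNIV :: 'a set) * n"
    using card_H by (simp add: card_cartesian_product)
  moreover have "card (UNIV :: 'a set) > 0" by (simp add: finite_UNIV_card_ge_0)
  ultimately show False using n_pos by simp
qed

lemma greedy:
  assumes card: "card (UNIV :: 'a set) = 2 * n * m"
    and wp: "\<forall>y. y + y - w \<notin> H"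
  shows "k \<le> m \<Longrightarrow> \<exists>x. (\<forall>q<k. \<forall>q'<k. q \<noteq> q' \<longrightarrow> x q - x q' \<notin> H) \<and>
                           (\<forall>q<k. \<forall>q'<k. x q + x q' - w \<notin> H)"
proof (induction k)
  case 0
  then show ?case by auto
next
  case (Suc k)
  then obtain x where x: "\<forall>q<k. \<forall>q'<k. q \<noteq> q' \<longrightarrow> x q - x q' \<notin> H"
    "\<forall>q<k. \<forall>q'<k. x q + x q' - w \<notin> H" by auto
  define B where "B = (\<Union>q<k. (\<lambda>i. x q + mul i) ` {..<n} \<union> (\<lambda>i. w - x q + mul i) ` {..<n})"
  have "card B \<le> (\<Sum>q<k. card ((\<lambda>i. x q + mul i) ` {..<n} \<union> (\<lambda>i. w - x q + mul i) ` {..<n}))"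
    unfolding B_def by (rule card_UN_le) simp
  also have "\<dots> \<le> (\<Sum>q<k. 2 * n)"
  proof (rule sum_mono)
    fix q
    show "card ((\<lambda>i. x q + mul i) ` {..<n} \<union> (\<lambda>i. w - x q + mul i) ` {..<n}) \<le> 2 * n"
      using card_Un_le[of "(\<lambda>i. x q + mul i) ` {..<n}" "(\<lambda>i. w - x q + mul i) ` {..<n}"]
        card_coset[of "x q"] card_coset[of "w - x q"] by simp
  qed
  also have "\<dots> = 2 * n * k" by simp
  also have "\<dots> < 2 * n * m" using Suc.prems n_pos by simp
  finally have "card B < card (UNIV :: 'a set)" using card by simp
  then have "B \<noteq> UNIV" by auto
  then obtain y where yB: "y \<notin> B" by auto
  have y1: "y - x q \<notin> H" if "q < k" for q
  proof
    assume "y - x q \<in> H"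
    then obtain i where "i < n" "y - x q = mul i" by (rule H_memE)
    then have "y = x q + mul i" "i \<in> {..<n}" by (auto simp: algebra_simps)
    then show False using yB that unfolding B_def by blast
  qed
  have y2: "y + x q - w \<notin> H" if "q < k" for q
  proof
    assume "y + x q - w \<in> H"
    then obtain i where "i < n" "y + x q - w = mul i" by (rule H_memE)
    then have "y = w - x q + mul i" "i \<in> {..<n}" by (auto simp: algebra_simps)
    then show False using yB that unfolding B_def by blast
  qed
  define x' where "x' = x(k := y)"
  have "(\<forall>q<Suc k. \<forall>q'<Suc k. q \<noteq> q' \<longrightarrow> x' q - x' q' \<notin> H)"
  proof (intro allI impI)
    fix q q' assume q: "q < Suc k" "q' < Suc k" "q \<noteq> q'"
    show "x' q - x' q' \<notin> H"
    proof (cases "q = k")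
      case True
      then have "q' < k" using q by auto
      then show ?thesis using True y1 unfolding x'_def by simp
    next
      case False
      note F = False
      show ?thesis
      proof (cases "q' = k")
        case True
        then have "q < k" using q F by auto
        have "x q - y \<notin> H"
        proof
          assume "x q - y \<in> H"
          then have "- (x q - y) \<in> H" by (rule H_neg)
          then show False using y1[OF \<open>q < k\<close>] by simp
        qed
        then show ?thesis using True F unfolding x'_def by simp
      next
        case False
        then show ?thesis using F q x(1) unfolding x'_def by simp
      qed
    qed
  qed
  moreover have "(\<forall>q<Suc k. \<forall>q'<Suc k. x' q + x' q' - w \<notin> H)"
  proof (intro allI impI)
    fix q q' assume q: "q < Suc k" "q' < Suc k"
    show "x' q + x' q' - w \<notin> H"
    proof (cases "q = k")
      case True
      show ?thesis
      proof (cases "q' = k")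
        case True
        then show ?thesis using \<open>q = k\<close> wp unfolding x'_def by simp
      next
        case False
        then show ?thesis using True q y2 unfolding x'_def by simp
      qed
    next
      case False
      note F = False
      show ?thesis
      proof (cases "q' = k")
        case True
        then have "q < k" using q F by auto
        then have "y + x q - w \<notin> H" using y2 by simp
        then show ?thesis using True F unfolding x'_def by (simp add: add.commute)
      next
        case False
        then show ?thesis using F q x(2) unfolding x'_def by simp
      qed
    qed
  qed
  ultimately show ?case by blast
qed

end

lemma mod_lt2: "(x::nat) < 2 * n \<Longrightarrow> x mod n = (if x < n then x else x - n)"
proof (cases "x < n")
  case False
  assume "x < 2 * n"
  then have "x - n < n" using False by simp
  moreover have "x mod n = (x - n) mod n" using False by (simp add: le_mod_geq)
  ultimately show ?thesis using False by simp
qed simp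

lemma diag_iff:
  assumes "i < n" "j < n" "l < (n::nat)"
  shows "((j + n - i) mod n = l) \<longleftrightarrow> (j = (i + l) mod n)"
proof -
  have a: "(j + n - i) mod n = (if j + n - i < n then j + n - i else j + n - i - n)"
    using assms by (intro mod_lt2) simp
  have b: "(i + l) mod n = (if i + l < n then i + l else i + l - n)"
    using assms by (intro mod_lt2) simp
  show ?thesis unfolding a b using assms by auto
qed

lemma diag_iff2:
  assumes "i < n" "j < n" "l < (n::nat)"
  shows "((j + n - i) mod n = l) \<longleftrightarrow> (i = (j + n - l) mod n)"
proof -
  have a: "(j + n - i) mod n = (if j + n - i < n then j + n - i else j + n - i - n)"
    using assms by (intro mod_lt2) simp
  have b: "(j + n - l) mod n = (if j + n - l < n then j + n - l else j + n - l - n)"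
    using assms by (intro mod_lt2) simp
  show ?thesis unfolding a b using assms by auto
qed

lemma int_diag:
  assumes "i < (n::nat)"
  shows "int ((j + n - i) mod n) = (int j - int i) mod int n"
proof -
  have "int ((j + n - i) mod n) = int (j + n - i) mod int n" by (simp add: zmod_int)
  also have "int (j + n - i) = (int j - int i) + int n" using assms by simp
  also have "((int j - int i) + int n) mod int n = (int j - int i) mod int n" by simp
  finally show ?thesis .
qed

lemma sum_pairs:
  fixes b :: nat and f :: "nat \<Rightarrow> 'a::comm_monoid_add"
  shows "(\<Sum>l<2*b. f l) = (\<Sum>p<b. f (2*p) + f (2*p+1))"
proof (induction b)
  case 0 then show ?case by simp
next
  case (Suc b)
  have "{..<2 * Suc b} = insert (Suc (2*b)) (insert (2*b) {..<2*b})" by auto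
  then have "(\<Sum>l<2 * Suc b. f l) = f (Suc (2*b)) + (f (2*b) + (\<Sum>l<2*b. f l))" by simp
  then show ?case using Suc by (simp add: algebra_simps)
qed

context cyc
begin

lemma idx_bound:
  assumes "t < c" "p < (b::nat)"
  shows "t * b + p < b * c"
proof -
  have "t * b + p < t * b + b" using assms by simp
  also have "\<dots> = Suc t * b" by simp
  also have "\<dots> \<le> c * b" using assms(1) by (intro mult_le_mono1) simp
  finally show ?thesis by (simp add: mult.commute)
qed

lemma idx_inj:
  assumes "p < (b::nat)" "p' < b" "t * b + p = t' * b + p'"
  shows "t = t' \<and> p = p'"
proof -
  have "t = (t * b + p) div b" using assms(1) by simp
  also have "\<dots> = (t' * b + p') div b" by (simp only: assms(3))
  also have "\<dots> = t'" using assms(2) by simp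
  finally have 1: "t = t'" .
  have "p = (t * b + p) mod b" using assms(1) by simp
  also have "\<dots> = (t' * b + p') mod b" by (simp only: assms(3))
  also have "\<dots> = p'" using assms(2) by simp
  finally show ?thesis using 1 by simp
qed

theorem construction:
  assumes b0: "0 < b" and c0: "0 < c" and bn: "2 * b \<le> n"
    and card: "card (UNIV :: 'a set) = 2 * n * b * c"
  shows "\<exists>A :: nat \<Rightarrow> nat \<Rightarrow> nat \<Rightarrow> 'a option. is_diagonal_MRS n (2 * b) c A"
proof -
  define m where "m = b * c"
  have cardm: "card (UNIV :: 'a set) = 2 * n * m" using card m_def by (simp add: mult.assoc)
  obtain w where wp: "\<forall>y. y + y - w \<notin> H" using exists_w[OF cardm] by blast
  obtain x where x1: "\<forall>q<m. \<forall>q'<m. q \<noteq> q' \<longrightarrow> x q - x q' \<notin> H"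
    and x2: "\<forall>q<m. \<forall>q'<m. x q + x q' - w \<notin> H"
    using greedy[OF cardm wp, of m] by blast
  define val where "val t i l = (if even l then x (t * b + l div 2) + mul i
                                  else w - x (t * b + l div 2) - mul i)" for t i l
  define A where "A t i j = (if (j + n - i) mod n < 2 * b then Some (val t i ((j + n - i) mod n))
                             else None)" for t i j
  have ln: "l < n" if "l < 2 * b" for l using that bn by simp
  have rowval: "A t i ((i + l) mod n) = Some (val t i l)" if "i < n" "l < 2 * b" for t i l
  proof -
    have "((i + l) mod n + n - i) mod n = l"
      using diag_iff[of i n "(i + l) mod n" l] that ln[OF that(2)] n_pos by simp
    then show ?thesis unfolding A_def using that by simp
  qed
  have colval: "A t ((j + n - l) mod n) j = Some (val t ((j + n - l) mod n) l)"
    if "j < n" "l < 2 * b" for t j l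
  proof -
    have "(j + n - (j + n - l) mod n) mod n = l"
      using diag_iff2[of "(j + n - l) mod n" n j l] that ln[OF that(2)] n_pos by simp
    then show ?thesis unfolding A_def using that by simp
  qed
  have rowset: "{j. j < n \<and> A t i j \<noteq> None} = (\<lambda>l. (i + l) mod n) ` {..<2 * b}" if "i < n" for t i
  proof
    show "{j. j < n \<and> A t i j \<noteq> None} \<subseteq> (\<lambda>l. (i + l) mod n) ` {..<2 * b}"
    proof
      fix j assume "j \<in> {j. j < n \<and> A t i j \<noteq> None}"
      then have j: "j < n" "(j + n - i) mod n < 2 * b" unfolding A_def by (auto split: if_splits)
      then have "j = (i + (j + n - i) mod n) mod n"
        using diag_iff[of i n j "(j + n - i) mod n"] that n_pos by simp
      then show "j \<in> (\<lambda>l. (i + l) mod n) ` {..<2 * b}" using j by blast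
    qed
    show "(\<lambda>l. (i + l) mod n) ` {..<2 * b} \<subseteq> {j. j < n \<and> A t i j \<noteq> None}"
      using rowval[OF that] n_pos by auto
  qed
  have rowinj: "inj_on (\<lambda>l. (i + l) mod n) {..<2 * b}" if "i < n" for i
  proof (rule inj_onI)
    fix l l' assume l: "l \<in> {..<2 * b}" "l' \<in> {..<2 * b}" "(i + l) mod n = (i + l') mod n"
    have l1: "l < n" "l' < n" using l(1,2) ln by auto
    have m1: "(i + l) mod n < n" "(i + l') mod n < n" using n_pos by simp_all
    have "l = (((i + l) mod n) + n - i) mod n"
      using diag_iff[OF that m1(1) l1(1)] by simp
    also have "\<dots> = (((i + l') mod n) + n - i) mod n" by (simp only: l(3))
    also have "\<dots> = l'"
      using diag_iff[OF that m1(2) l1(2)] by simp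
    finally show "l = l'" .
  qed
  have colset: "{i. i < n \<and> A t i j \<noteq> None} = (\<lambda>l. (j + n - l) mod n) ` {..<2 * b}" if "j < n" for t j
  proof
    show "{i. i < n \<and> A t i j \<noteq> None} \<subseteq> (\<lambda>l. (j + n - l) mod n) ` {..<2 * b}"
    proof
      fix i assume "i \<in> {i. i < n \<and> A t i j \<noteq> None}"
      then have i: "i < n" "(j + n - i) mod n < 2 * b" unfolding A_def by (auto split: if_splits)
      then have "i = (j + n - (j + n - i) mod n) mod n"
        using diag_iff2[of i n j "(j + n - i) mod n"] that n_pos by simp
      then show "i \<in> (\<lambda>l. (j + n - l) mod n) ` {..<2 * b}" using i by blast
    qed
    show "(\<lambda>l. (j + n - l) mod n) ` {..<2 * b} \<subseteq> {i. i < n \<and> A t i j \<noteq> None}"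
      using colval[OF that] n_pos by auto
  qed
  have colinj: "inj_on (\<lambda>l. (j + n - l) mod n) {..<2 * b}" if "j < n" for j
  proof (rule inj_onI)
    fix l l' assume l: "l \<in> {..<2 * b}" "l' \<in> {..<2 * b}" "(j + n - l) mod n = (j + n - l') mod n"
    have l1: "l < n" "l' < n" using l(1,2) ln by auto
    have m1: "(j + n - l) mod n < n" "(j + n - l') mod n < n" using n_pos by simp_all
    have "l = (j + n - (j + n - l) mod n) mod n"
      using diag_iff2[OF m1(1) that l1(1)] by simp
    also have "\<dots> = (j + n - (j + n - l') mod n) mod n" by (simp only: l(3))
    also have "\<dots> = l'"
      using diag_iff2[OF m1(2) that l1(2)] by simp
    finally show "l = l'" .
  qed
  have rowsum: "(\<Sum>j\<in>{j. j < n \<and> A t i j \<noteq> None}. the (A t i j)) = (\<Sum>p<b. w)" if "i < n" for t i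
  proof -
    have "(\<Sum>j\<in>{j. j < n \<and> A t i j \<noteq> None}. the (A t i j))
        = (\<Sum>l<2*b. the (A t i ((i + l) mod n)))"
      unfolding rowset[OF that] by (rule sum.reindex_cong[OF rowinj[OF that] refl]) simp
    also have "\<dots> = (\<Sum>l<2*b. val t i l)" using rowval[OF that] by simp
    also have "\<dots> = (\<Sum>p<b. val t i (2*p) + val t i (2*p+1))" by (rule sum_pairs)
    also have "\<dots> = (\<Sum>p<b. w)"
    proof (rule sum.cong[OF refl])
      fix p
      have "(2 * p + 1) div 2 = (p::nat)" by simp
      then show "val t i (2*p) + val t i (2*p+1) = w" unfolding val_def by simp
    qed
    finally show ?thesis .
  qed
  have colsum: "(\<Sum>i\<in>{i. i < n \<and> A t i j \<noteq> None}. the (A t i j)) = (\<Sum>p<b. w + g)" if "j < n" for t j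
  proof -
    have "(\<Sum>i\<in>{i. i < n \<and> A t i j \<noteq> None}. the (A t i j))
        = (\<Sum>l<2*b. the (A t ((j + n - l) mod n) j))"
      unfolding colset[OF that] by (rule sum.reindex_cong[OF colinj[OF that] refl]) simp
    also have "\<dots> = (\<Sum>l<2*b. val t ((j + n - l) mod n) l)" using colval[OF that] by simp
    also have "\<dots> = (\<Sum>p<b. val t ((j + n - 2*p) mod n) (2*p) + val t ((j + n - (2*p+1)) mod n) (2*p+1))"
      by (rule sum_pairs)
    also have "\<dots> = (\<Sum>p<b. w + g)"
    proof (rule sum.cong[OF refl])
      fix p assume "p \<in> {..<b}"
      then have pb: "2 * p + 1 \<le> n" using bn by simp
      have e: "j + n - 2 * p = (j + n - (2 * p + 1)) + 1" using pb by simp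
      have "mul ((j + n - 2*p) mod n) = mul ((j + n - (2*p+1)) mod n) + g"
        by (simp only: mul_mod[symmetric] e mul_add mul_1)
      moreover have "(2 * p + 1) div 2 = (p::nat)" by simp
      ultimately show "val t ((j + n - 2*p) mod n) (2*p) + val t ((j + n - (2*p+1)) mod n) (2*p+1) = w + g"
        unfolding val_def by (simp add: algebra_simps)
    qed
    finally show ?thesis .
  qed
  define P where "P = {..<c} \<times> {..<n} \<times> {..<2*b}"
  define \<kappa> :: "nat \<times> nat \<times> nat \<Rightarrow> nat \<times> nat \<times> nat"
    where "\<kappa> = (\<lambda>(t, i, l). (t, i, (i + l) mod n))"
  define V :: "nat \<times> nat \<times> nat \<Rightarrow> 'a" where "V = (\<lambda>(t, i, l). val t i l)"
  define f :: "nat \<times> nat \<times> nat \<Rightarrow> 'a" where "f = (\<lambda>(t, i, j). the (A t i j))"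
  have filled: "filled_cells n n c A = \<kappa> ` P"
  proof
    show "filled_cells n n c A \<subseteq> \<kappa> ` P"
    proof
      fix z assume "z \<in> filled_cells n n c A"
      then obtain t i j where z: "z = (t, i, j)" "t < c" "i < n" "j < n" "A t i j \<noteq> None"
        unfolding filled_cells_def by auto
      then have "j \<in> (\<lambda>l. (i + l) mod n) ` {..<2 * b}" using rowset[of i t] by blast
      then obtain l where "l < 2 * b" "j = (i + l) mod n" by auto
      then show "z \<in> \<kappa> ` P" unfolding \<kappa>_def P_def using z
        by (auto intro!: image_eqI[of _ _ "(t, i, l)"])
    qed
    show "\<kappa> ` P \<subseteq> filled_cells n n c A"
      unfolding \<kappa>_def P_def filled_cells_def using rowval n_pos by auto
  qed
  have fk: "(f \<circ> \<kappa>) z = V z" if "z \<in> P" for z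
    using that rowval unfolding P_def f_def \<kappa>_def V_def by auto
  have injV: "inj_on V P"
  proof (rule inj_onI)
    fix z z' assume zz: "z \<in> P" "z' \<in> P" "V z = V z'"
    obtain t i l where z: "z = (t, i, l)" "t < c" "i < n" "l < 2 * b" using zz(1) P_def by auto
    obtain t' i' l' where z': "z' = (t', i', l')" "t' < c" "i' < n" "l' < 2 * b" using zz(2) P_def by auto
    define q where "q = t * b + l div 2"
    define q' where "q' = t' * b + l' div 2"
    have qm: "q < m" unfolding q_def m_def using idx_bound z by simp
    have qm': "q' < m" unfolding q'_def m_def using idx_bound z' by simp
    have ev: "val t i l = val t' i' l'" using zz(3) z z' V_def by simp
    have same: "t = t' \<and> l = l'" if "q = q'" "even l = even l'"
    proof -
      have "t = t' \<and> l div 2 = l' div 2"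
        using idx_inj[of "l div 2" b "l' div 2" t t'] that(1) z z' unfolding q_def q'_def by simp
      moreover have "l = 2 * (l div 2) + l mod 2" "l' = 2 * (l' div 2) + l' mod 2" by simp_all
      moreover have "l mod 2 = l' mod 2" using that(2)
        by (cases "even l") (simp_all add: even_iff_mod_2_eq_zero odd_iff_mod_2_eq_one)
      ultimately show ?thesis by linarith
    qed
    have "t = t' \<and> i = i' \<and> l = l'"
    proof (cases "even l")
      case el: True
      show ?thesis
      proof (cases "even l'")
        case el': True
        have e: "x q + mul i = x q' + mul i'" using ev el el' unfolding val_def q_def q'_def by simp
        have qq: "q = q'"
        proof (rule ccontr)
          assume "q \<noteq> q'"
          moreover have "x q - x q' = mul i' - mul i" using e by (simp add: algebra_simps)
          then have "x q - x q' \<in> H" using H_diff[OF H_mem H_mem] by simp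
          ultimately show False using x1 qm qm' by blast
        qed
        then have "mul i = mul i'" using e by simp
        then have "i = i'" using mul_inj z z' by (simp add: inj_on_def)
        then show ?thesis using same qq el el' by simp
      next
        case el': False
        have e: "x q + mul i = w - x q' - mul i'" using ev el el' unfolding val_def q_def q'_def by simp
        then have "x q + x q' - w = - (mul i + mul i')" by (simp add: algebra_simps)
        moreover have "- (mul i + mul i') \<in> H" by (intro H_neg H_add H_mem)
        ultimately have "x q + x q' - w \<in> H" by simp
        then show ?thesis using x2 qm qm' by blast
      qed
    next
      case el: False
      show ?thesis
      proof (cases "even l'")
        case el': True
        have e: "w - x q - mul i = x q' + mul i'" using ev el el' unfolding val_def q_def q'_def by simp
        then have "x q' + x q - w = - (mul i + mul i')" by (simp add: algebra_simps)
        moreover have "- (mul i + mul i') \<in> H" by (intro H_neg H_add H_mem)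
        ultimately have "x q' + x q - w \<in> H" by simp
        then show ?thesis using x2 qm qm' by blast
      next
        case el': False
        have e: "w - x q - mul i = w - x q' - mul i'" using ev el el' unfolding val_def q_def q'_def by simp
        have qq: "q = q'"
        proof (rule ccontr)
          assume "q \<noteq> q'"
          moreover have "x q - x q' = mul i' - mul i" using e by (simp add: algebra_simps)
          then have "x q - x q' \<in> H" using H_diff[OF H_mem H_mem] by simp
          ultimately show False using x1 qm qm' by blast
        qed
        then have "mul i = mul i'" using e by simp
        then have "i = i'" using mul_inj z z' by (simp add: inj_on_def)
        then show ?thesis using same qq el el' by simp
      qed
    qed
    then show "z = z'" using z z' by simp
  qed
  have cardP: "card P = card (UNIV :: 'a set)" unfolding P_def using card
    by (simp add: card_cartesian_product mult.commute mult.left_commute)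
  have VP: "V ` P = UNIV"
    by (rule card_eq_UNIV_imp_eq_UNIV) (use card_image[OF injV] cardP in simp_all)
  have "inj_on (f \<circ> \<kappa>) P = inj_on V P" by (rule inj_on_cong) (rule fk)
  then have injfk: "inj_on (f \<circ> \<kappa>) P" using injV by simp
  have bij: "bij_betw f (filled_cells n n c A) UNIV"
    unfolding bij_betw_def filled
  proof
    show "inj_on f (\<kappa> ` P)" using injfk by (rule inj_on_imageI)
    have "f ` \<kappa> ` P = (f \<circ> \<kappa>) ` P" by (simp add: image_comp)
    also have "\<dots> = V ` P" by (rule image_cong[OF refl]) (rule fk)
    finally show "f ` \<kappa> ` P = UNIV" using VP by simp
  qed
  have mrs: "is_MRS n n (2 * b) (2 * b) c A"
    unfolding is_MRS_def
  proof (intro conjI)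
    show "card (UNIV :: 'a set) = n * (2 * b) * c" using card by simp
    show "bij_betw (\<lambda>(t, i, j). the (A t i j)) (filled_cells n n c A) UNIV" using bij f_def by simp
    show "\<forall>t<c. \<forall>i<n. card {j. j < n \<and> A t i j \<noteq> None} = 2 * b"
      using rowset rowinj by (simp add: card_image)
    show "\<forall>t<c. \<forall>j<n. card {i. i < n \<and> A t i j \<noteq> None} = 2 * b"
      using colset colinj by (simp add: card_image)
    show "\<exists>\<omega> \<delta>. (\<forall>t<c. \<forall>i<n. (\<Sum>j\<in>{j. j < n \<and> A t i j \<noteq> None}. the (A t i j)) = \<omega>) \<and>
        (\<forall>t<c. \<forall>j<n. (\<Sum>i\<in>{i. i < n \<and> A t i j \<noteq> None}. the (A t i j)) = \<delta>)"
      using rowsum colsum by blast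
  qed
  have diag: "\<forall>t<c. \<exists>t0. \<forall>i<n. \<forall>j<n. (A t i j \<noteq> None \<longleftrightarrow> (\<exists>l<2 * b. on_diagonal n (t0 + l) i j))"
  proof (intro allI impI exI[of _ 0])
    fix t i j assume "t < c" "i < n" "j < n"
    have od: "on_diagonal n l i j \<longleftrightarrow> (j + n - i) mod n = l" if "l < 2 * b" for l
    proof -
      have "int l mod int n = int l" using ln[OF that] by simp
      then have "on_diagonal n l i j \<longleftrightarrow> int ((j + n - i) mod n) = int l"
        unfolding on_diagonal_def using int_diag[OF \<open>i < n\<close>, of j] by simp
      then show ?thesis by simp
    qed
    have "A t i j \<noteq> None \<longleftrightarrow> (j + n - i) mod n < 2 * b" unfolding A_def by simp
    also have "\<dots> \<longleftrightarrow> (\<exists>l<2 * b. (j + n - i) mod n = l)" by auto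
    also have "\<dots> \<longleftrightarrow> (\<exists>l<2 * b. on_diagonal n (0 + l) i j)" using od by auto
    finally show "A t i j \<noteq> None \<longleftrightarrow> (\<exists>l<2 * b. on_diagonal n (0 + l) i j)" .
  qed
  show ?thesis unfolding is_diagonal_MRS_def using mrs diag by blast
qed

end

theorem corollary5p7:
  fixes b n c :: nat
  assumes "0 < b" "0 < n" "0 < c"
    and "2 \<le> 2 * b" "2 * b \<le> n"
    and "card (UNIV :: ('a::{ab_group_add,finite}) set) = 2 * n * b * c"
  shows "((\<exists>x::'a. elem_order x = n) \<longrightarrow>
            (\<exists>A :: nat \<Rightarrow> nat \<Rightarrow> nat \<Rightarrow> 'a option. is_diagonal_MRS n (2 * b) c A))
       \<and> (n dvd group_exponent TYPE('a) \<longrightarrow>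
            (\<exists>A :: nat \<Rightarrow> nat \<Rightarrow> nat \<Rightarrow> 'a option. is_diagonal_MRS n (2 * b) c A))"
proof -
  have main: "\<exists>A :: nat \<Rightarrow> nat \<Rightarrow> nat \<Rightarrow> 'a option. is_diagonal_MRS n (2 * b) c A"
    if ex: "\<exists>x::'a. elem_order x = n"
  proof -
    obtain g :: 'a where g: "elem_order g = n" using ex by blast
    interpret cyc g n by unfold_locales (rule g)
    show ?thesis using construction assms by blast
  qed
  have "\<exists>x::'a. elem_order x = n" if "n dvd group_exponent TYPE('a)"
    using exists_order_of_dvd_exponent[OF that assms(2)] .
  then show ?thesis using main by blast
qed

end
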